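(* For every integer $n\geq 1$, the following equalities of combinatorial games hold: $$\uparrow^{[n]}*\ =\ \left\{0, \uparrow^{[n-1]}*\ \big|\ 0, \uparrow^{[n+1]}*\right\}\ =\ \left\{0, \uparrow^{[n-1]}*\ \big|\ 0\right\},$$ $$\downarrow_{[n]}*\ =\ \left\{0,\downarrow_{[n+1]}*\ \big|\ 0, \downarrow_{[n-1]}*\right\}\ =\ \left\{0\ \big|\ 0, \downarrow_{[n-1]}*\right\}.$$ Furthermore, $$\uparrow^{[n]}*\ =\ \left\{0,\{0,\uparrow^{[n]}*\ |\ 0,\uparrow^{[n]}*\}\ \Big|\ 0,\{0,\uparrow^{[n]}*\ |\ 0,\uparrow^{[n]}*\}\right\},$$ $$\downarrow_{[n]}*\ =\ \left\{0,\{0,\downarrow_{[n]}*\ |\ 0,\downarrow_{[n]}*\}\ \Big|\ 0,\{0,\downarrow_{[n]}*\ |\ 0,\downarrow_{[n]}*\}\right\}.$$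
   Context: Games are short partizan combinatorial games under normal play (the player unable to move loses), in Conway's theory: $\{X\mid Y\}$ denotes the game whose Left options are the games in $X$ and Right options the games in $Y$; $G+H$ is the disjunctive sum; $-G$ swaps the roles of Left and Right; $G=H$ means that $G+(-H)$ is a win for the second player. Notation: $0=\{\,\mid\,\}$, $*=\{0\mid 0\}$, $\uparrow=\{0\mid *\}$, $\downarrow=\{*\mid 0\}$; $\uparrow^{[1]}=\uparrow$ and $\uparrow^{[n]}=\{\uparrow^{[n-1]}\mid *\}$ for $n\geq 2$; $\downarrow_{[1]}=\downarrow$ and $\downarrow_{[n]}=\{*\mid \downarrow_{[n-1]}\}$ for $n\geq 2$; with the convention $\uparrow^{[0]}=\downarrow_{[0]}=0$. For a game $J$, $J*$ denotes $J+*$. *)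

theory Defs
  imports Main
begin

text \<open>Short partizan games, represented syntactically: a game is given by the
finite list of its Left options and the finite list of its Right options.\<close>

datatype game = Game "game list" "game list"

definition zero :: game where "zero = Game [] []"
definition star :: game where "star = Game [zero] [zero]"

primrec neg :: "game \<Rightarrow> game" where
  "neg (Game L R) = Game (map neg R) (map neg L)"

lemma size_mem_lt: "x \<in> set xs \<Longrightarrow> size x < Suc (size_list size xs + k)"
  by (induction xs) auto

lemma size_mem_lt2: "x \<in> set xs \<Longrightarrow> size x < Suc (k + size_list size xs)"
  by (induction xs) auto

function gsum :: "game \<Rightarrow> game \<Rightarrow> game" where
  "gsum (Game GL GR) (Game HL HR) =
     Game (map (\<lambda>x. gsum x (Game HL HR)) GL @ map (\<lambda>y. gsum (Game GL GR) y) HL)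
          (map (\<lambda>x. gsum x (Game HL HR)) GR @ map (\<lambda>y. gsum (Game GL GR) y) HR)"
  by pat_completeness auto
termination
  by (relation "measure (\<lambda>(G, H). size G + size H)")
     (auto intro: size_mem_lt size_mem_lt2)

fun left_first_win :: "game \<Rightarrow> bool" and right_first_win :: "game \<Rightarrow> bool" where
  "left_first_win (Game L R) = (\<exists>x\<in>set L. \<not> right_first_win x)"
| "right_first_win (Game L R) = (\<exists>y\<in>set R. \<not> left_first_win y)"

definition second_player_win :: "game \<Rightarrow> bool" where
  "second_player_win G \<longleftrightarrow> \<not> left_first_win G \<and> \<not> right_first_win G"

definition game_eq :: "game \<Rightarrow> game \<Rightarrow> bool" where
  "game_eq G H \<longleftrightarrow> second_player_win (gsum G (neg H))"

text \<open>\<up>^[n] and \<down>_[n], with \<up>^[0] = \<down>_[0] = 0;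
  \<up>^[1] = {0|*} = \<up>, \<up>^[n] = {\<up>^[n-1] | *};
  \<down>_[1] = {*|0} = \<down>, \<down>_[n] = {* | \<down>_[n-1]}.\<close>
primrec upn :: "nat \<Rightarrow> game" where
  "upn 0 = zero"
| "upn (Suc n) = Game [upn n] [star]"

primrec downn :: "nat \<Rightarrow> game" where
  "downn 0 = zero"
| "downn (Suc n) = Game [star] [downn n]"

end

theory Submission
  imports Defs
begin

fun lo :: "game \<Rightarrow> game list" where "lo (Game L R) = L"
fun ro :: "game \<Rightarrow> game list" where "ro (Game L R) = R"

function gle :: "game \<Rightarrow> game \<Rightarrow> bool" where
  "gle (Game GL GR) (Game HL HR) =
     ((\<forall>x\<in>set GL. \<not> gle (Game HL HR) x) \<and> (\<forall>y\<in>set HR. \<not> gle y (Game GL GR)))"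
  by pat_completeness auto
termination
  by (relation "measure (\<lambda>(G, H). size G + size H)")
     (auto intro: size_mem_lt size_mem_lt2)

lemma gle_def': "gle G H \<longleftrightarrow> (\<forall>x\<in>set (lo G). \<not> gle H x) \<and> (\<forall>y\<in>set (ro H). \<not> gle y G)"
  by (cases G; cases H) simp

lemma size_lo: "x \<in> set (lo G) \<Longrightarrow> size x < size G"
  by (cases G) (auto intro: size_mem_lt)
lemma size_ro: "x \<in> set (ro G) \<Longrightarrow> size x < size G"
  by (cases G) (auto intro: size_mem_lt2)

lemma gle_refl: "gle G G"
proof (induction G)
  case (Game L R)
  show ?case
  proof (subst gle_def', intro conjI ballI)
    fix x assume x: "x \<in> set (lo (Game L R))"
    show "\<not> gle (Game L R) x"
      using x Game(1)[of x] by (subst gle_def') auto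
  next
    fix y assume y: "y \<in> set (ro (Game L R))"
    show "\<not> gle y (Game L R)"
      using y Game(2)[of y] by (subst gle_def') auto
  qed
qed

lemma lo_not: "x \<in> set (lo G) \<Longrightarrow> \<not> gle G x"
  using gle_refl[of x] by (subst gle_def') auto
lemma ro_not: "y \<in> set (ro G) \<Longrightarrow> \<not> gle y G"
  using gle_refl[of y] by (subst gle_def') auto

lemma gle_trans_aux: "n = size A + size B + size C \<Longrightarrow> gle A B \<Longrightarrow> gle B C \<Longrightarrow> gle A C"
proof (induction n arbitrary: A B C rule: less_induct)
  case (less n)
  show ?case
  proof (subst gle_def', intro conjI ballI)
    fix x assume x: "x \<in> set (lo A)"
    show "\<not> gle C x"
    proof
      assume "gle C x"
      with less.prems(3) have "gle B x"
        using less.IH[of "size B + size C + size x" B C x] size_lo[OF x] less.prems(1) by simp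
      with less.prems(2) x show False by (subst (asm) gle_def') auto
    qed
  next
    fix y assume y: "y \<in> set (ro C)"
    show "\<not> gle y A"
    proof
      assume "gle y A"
      with less.prems(2) have "gle y B"
        using less.IH[of "size y + size A + size B" y A B] size_ro[OF y] less.prems(1) by simp
      with less.prems(3) y show False by (subst (asm) gle_def'[of B]) auto
    qed
  qed
qed

lemma gle_trans: "gle A B \<Longrightarrow> gle B C \<Longrightarrow> gle A C"
  using gle_trans_aux by blast

lemma via_lo: "l \<in> set (lo H) \<Longrightarrow> gle G l \<Longrightarrow> \<not> gle H G"
  using gle_trans lo_not by blast
lemma via_ro: "r \<in> set (ro G) \<Longrightarrow> gle r H \<Longrightarrow> \<not> gle H G"
  using gle_trans ro_not by blast

lemma not_gle_E: "\<not> gle G H \<Longrightarrow> (\<exists>x\<in>set (lo G). gle H x) \<or> (\<exists>y\<in>set (ro H). gle y G)"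
  by (subst (asm) gle_def') auto

lemma lo_gsum: "lo (gsum G H) = map (\<lambda>x. gsum x H) (lo G) @ map (gsum G) (lo H)"
  by (cases G; cases H) simp
lemma ro_gsum: "ro (gsum G H) = map (\<lambda>x. gsum x H) (ro G) @ map (gsum G) (ro H)"
  by (cases G; cases H) simp

lemma gle_mono_aux: "n = size A + size B + size C + size D \<Longrightarrow> gle A B \<Longrightarrow> gle C D
   \<Longrightarrow> gle (gsum A C) (gsum B D)"
proof (induction n arbitrary: A B C D rule: less_induct)
  case (less n)
  note IH = less.IH[OF _ refl]
  show ?case
  proof (subst gle_def', intro conjI ballI)
    fix x assume "x \<in> set (lo (gsum A C))"
    then consider (a) a where "a \<in> set (lo A)" "x = gsum a C"
      | (c) c where "c \<in> set (lo C)" "x = gsum A c"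
      by (auto simp: lo_gsum)
    then show "\<not> gle (gsum B D) x"
    proof cases
      case a
      from less.prems(2) a(1) have "\<not> gle B a" by (subst (asm) gle_def') auto
      then consider (1) b where "b \<in> set (lo B)" "gle a b" | (2) r where "r \<in> set (ro a)" "gle r B"
        using not_gle_E by blast
      then show ?thesis
      proof cases
        case 1
        have "gle (gsum a C) (gsum b D)"
          using IH[OF _ 1(2) less.prems(3)] size_lo[OF a(1)] size_lo[OF 1(1)] less.prems(1) by simp
        moreover have "gsum b D \<in> set (lo (gsum B D))" using 1(1) by (simp add: lo_gsum)
        ultimately show ?thesis using a(2) via_lo by blast
      next
        case 2
        have "gle (gsum r C) (gsum B D)"
          using IH[OF _ 2(2) less.prems(3)] size_lo[OF a(1)] size_ro[OF 2(1)] less.prems(1) by simp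
        moreover have "gsum r C \<in> set (ro (gsum a C))" using 2(1) by (simp add: ro_gsum)
        ultimately show ?thesis using a(2) via_ro by blast
      qed
    next
      case c
      from less.prems(3) c(1) have "\<not> gle D c" by (subst (asm) gle_def') auto
      then consider (1) b where "b \<in> set (lo D)" "gle c b" | (2) r where "r \<in> set (ro c)" "gle r D"
        using not_gle_E by blast
      then show ?thesis
      proof cases
        case 1
        have "gle (gsum A c) (gsum B b)"
          using IH[OF _ less.prems(2) 1(2)] size_lo[OF c(1)] size_lo[OF 1(1)] less.prems(1) by simp
        moreover have "gsum B b \<in> set (lo (gsum B D))" using 1(1) by (simp add: lo_gsum)
        ultimately show ?thesis using c(2) via_lo by blast
      next
        case 2
        have "gle (gsum A r) (gsum B D)"
          using IH[OF _ less.prems(2) 2(2)] size_lo[OF c(1)] size_ro[OF 2(1)] less.prems(1) by simp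
        moreover have "gsum A r \<in> set (ro (gsum A c))" using 2(1) by (simp add: ro_gsum)
        ultimately show ?thesis using c(2) via_ro by blast
      qed
    qed
  next
    fix y assume "y \<in> set (ro (gsum B D))"
    then consider (b) b where "b \<in> set (ro B)" "y = gsum b D"
      | (d) d where "d \<in> set (ro D)" "y = gsum B d"
      by (auto simp: ro_gsum)
    then show "\<not> gle y (gsum A C)"
    proof cases
      case b
      from less.prems(2) b(1) have "\<not> gle b A" by (subst (asm) gle_def') auto
      then consider (1) l where "l \<in> set (lo b)" "gle A l" | (2) r where "r \<in> set (ro A)" "gle r b"
        using not_gle_E by blast
      then show ?thesis
      proof cases
        case 1
        have "gle (gsum A C) (gsum l D)"
          using IH[OF _ 1(2) less.prems(3)] size_ro[OF b(1)] size_lo[OF 1(1)] less.prems(1) by simp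
        moreover have "gsum l D \<in> set (lo (gsum b D))" using 1(1) by (simp add: lo_gsum)
        ultimately show ?thesis using b(2) via_lo by blast
      next
        case 2
        have "gle (gsum r C) (gsum b D)"
          using IH[OF _ 2(2) less.prems(3)] size_ro[OF b(1)] size_ro[OF 2(1)] less.prems(1) by simp
        moreover have "gsum r C \<in> set (ro (gsum A C))" using 2(1) by (simp add: ro_gsum)
        ultimately show ?thesis using b(2) via_ro by blast
      qed
    next
      case d
      from less.prems(3) d(1) have "\<not> gle d C" by (subst (asm) gle_def') auto
      then consider (1) l where "l \<in> set (lo d)" "gle C l" | (2) r where "r \<in> set (ro C)" "gle r d"
        using not_gle_E by blast
      then show ?thesis
      proof cases
        case 1
        have "gle (gsum A C) (gsum B l)"
          using IH[OF _ less.prems(2) 1(2)] size_ro[OF d(1)] size_lo[OF 1(1)] less.prems(1) by simp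
        moreover have "gsum B l \<in> set (lo (gsum B d))" using 1(1) by (simp add: lo_gsum)
        ultimately show ?thesis using d(2) via_lo by blast
      next
        case 2
        have "gle (gsum A r) (gsum B d)"
          using IH[OF _ less.prems(2) 2(2)] size_ro[OF d(1)] size_ro[OF 2(1)] less.prems(1) by simp
        moreover have "gsum A r \<in> set (ro (gsum A C))" using 2(1) by (simp add: ro_gsum)
        ultimately show ?thesis using d(2) via_ro by blast
      qed
    qed
  qed
qed

lemma gle_mono: "gle A B \<Longrightarrow> gle C D \<Longrightarrow> gle (gsum A C) (gsum B D)"
  using gle_mono_aux by blast

lemma lo_neg: "lo (neg G) = map neg (ro G)" by (cases G) simp
lemma ro_neg: "ro (neg G) = map neg (lo G)" by (cases G) simp

lemma gle_neg_aux: "n = size A + size B \<Longrightarrow> gle (neg B) (neg A) \<longleftrightarrow> gle A B"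
proof (induction n arbitrary: A B rule: less_induct)
  case (less n)
  have 1: "\<forall>r\<in>set (ro B). gle (neg A) (neg r) = gle r A"
    using less.IH[OF _ refl] size_ro less.prems by force
  have 2: "\<forall>l\<in>set (lo A). gle (neg l) (neg B) = gle B l"
    using less.IH[OF _ refl] size_lo less.prems by force
  show ?case
    apply (subst gle_def')
    apply (subst gle_def'[of A])
    using 1 2 by (simp add: lo_neg ro_neg) blast
qed

lemma gle_neg: "gle A B \<Longrightarrow> gle (neg B) (neg A)"
  using gle_neg_aux by blast

lemma outcome_link: "(\<not> left_first_win G \<longleftrightarrow> gle G zero) \<and> (\<not> right_first_win G \<longleftrightarrow> gle zero G)"
proof (induction G)
  case (Game L R)
  then show ?case by (auto simp: zero_def)
qed

lemma mirror: "gle (gsum G (neg G)) zero \<and> gle zero (gsum G (neg G))"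
proof (induction G)
  case (Game L R)
  show ?case
  proof
    show "gle (gsum (Game L R) (neg (Game L R))) zero"
    proof (subst gle_def', intro conjI ballI)
      fix x assume "x \<in> set (lo (gsum (Game L R) (neg (Game L R))))"
      then consider (a) a where "a \<in> set L" "x = gsum a (neg (Game L R))"
        | (b) b where "b \<in> set R" "x = gsum (Game L R) (neg b)"
        by (auto simp: lo_gsum)
      then show "\<not> gle zero x"
      proof cases
        case a
        have "gsum a (neg a) \<in> set (ro x)" using a by (simp add: ro_gsum)
        then show ?thesis using via_ro Game(1)[OF a(1)] by blast
      next
        case b
        have "gsum b (neg b) \<in> set (ro x)" using b by (simp add: ro_gsum)
        then show ?thesis using via_ro Game(2)[OF b(1)] by blast
      qed
    qed (simp add: zero_def)
  next
    show "gle zero (gsum (Game L R) (neg (Game L R)))"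
    proof (subst gle_def', intro conjI ballI)
      fix x assume "x \<in> set (ro (gsum (Game L R) (neg (Game L R))))"
      then consider (a) a where "a \<in> set R" "x = gsum a (neg (Game L R))"
        | (b) b where "b \<in> set L" "x = gsum (Game L R) (neg b)"
        by (auto simp: ro_gsum)
      then show "\<not> gle x zero"
      proof cases
        case a
        have "gsum a (neg a) \<in> set (lo x)" using a by (simp add: lo_gsum)
        then show ?thesis using via_lo Game(2)[OF a(1)] by blast
      next
        case b
        have "gsum b (neg b) \<in> set (lo x)" using b by (simp add: lo_gsum)
        then show ?thesis using via_lo Game(1)[OF b(1)] by blast
      qed
    qed (simp add: zero_def)
  qed
qed

lemma eqv_game_eq: "gle G H \<Longrightarrow> gle H G \<Longrightarrow> game_eq G H"
proof -
  assume a: "gle G H" "gle H G"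
  have "gle (gsum G (neg H)) (gsum H (neg H))" using gle_mono[OF a(1) gle_refl] .
  then have 1: "gle (gsum G (neg H)) zero" using mirror gle_trans by blast
  have "gle (gsum H (neg H)) (gsum G (neg H))" using gle_mono[OF a(2) gle_refl] .
  then have 2: "gle zero (gsum G (neg H))" using mirror gle_trans by blast
  show ?thesis unfolding game_eq_def second_player_win_def using 1 2 outcome_link by blast
qed


lemma gsum_zz[simp]: "gsum zero zero = zero" by (simp add: zero_def)
lemma gsum_zs[simp]: "gsum zero star = star" by (simp add: zero_def star_def)
lemma gsum_sz[simp]: "gsum star zero = star" by (simp add: zero_def star_def)
lemma neg_zero[simp]: "neg zero = zero" by (simp add: zero_def)
lemma neg_star[simp]: "neg star = star" by (simp add: zero_def star_def)
lemma lo_zero[simp]: "lo zero = []" and ro_zero[simp]: "ro zero = []" by (simp_all add: zero_def)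
lemma lo_star[simp]: "lo star = [zero]" and ro_star[simp]: "ro star = [zero]" by (simp_all add: star_def)

lemma upn_Suc_star: "gsum (upn (Suc m)) star =
  Game [gsum (upn m) star, gsum (upn (Suc m)) zero] [gsum star star, gsum (upn (Suc m)) zero]"
  by (simp add: star_def zero_def upn.simps)
lemma upn_Suc_zero_ro: "ro (gsum (upn (Suc m)) zero) = [star]"
  by (simp add: ro_gsum)

declare upn.simps(2)[simp del]
lemma lo_upn[simp]: "lo (upn (Suc m)) = [upn m]" by (simp add: upn.simps)
lemma ro_upn[simp]: "ro (upn (Suc m)) = [star]" by (simp add: upn.simps)

lemma neg_gsum: "neg (gsum A B) = gsum (neg A) (neg B)"
  by (induction A B rule: gsum.induct) simp
lemma downn_neg: "downn k = neg (upn k)"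
  by (induction k) (simp_all add: upn.simps)

lemma gle_zz: "gle zero zero" by (rule gle_refl)
lemma not_zero_star: "\<not> gle zero star" by (rule via_ro[of zero]) (simp_all add: gle_zz)
lemma not_star_zero: "\<not> gle star zero" by (rule via_lo[of zero]) (simp_all add: gle_zz)

lemma F1: "gle zero (upn k)"
  by (cases k) (auto simp: gle_zz not_star_zero intro!: gle_def'[THEN iffD2])

lemma F2: "gle star (gsum (upn k) star)"
  using gle_mono[OF F1[of k] gle_refl[of star]] by simp
lemma F3: "gle zero (gsum (upn k) zero)"
  using gle_mono[OF F1[of k] gle_zz] by simp
lemma F4: "gle (gsum star star) zero" "gle zero (gsum star star)"
  using mirror[of star] by simp_all
lemma F5: "\<not> gle zero (gsum (upn k) star)"
proof (cases k)
  case 0 then show ?thesis using not_zero_star by simp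
next
  case (Suc m) then show ?thesis
    using via_ro[of "gsum star star" "gsum (upn k) star" zero] F4 by (simp add: upn_Suc_star)
qed
lemma F6: "\<not> gle (gsum (upn k) star) zero"
proof (cases k)
  case 0 then show ?thesis using not_star_zero by simp
next
  case (Suc m) then show ?thesis
    using via_lo[of "gsum (upn k) zero" "gsum (upn k) star" zero] F3 by (simp add: upn_Suc_star)
qed
lemma F7u: "gle (upn k) (upn (Suc k))"
proof (induction k)
  case 0 then show ?case using F1 by simp
next
  case (Suc k)
  show ?case
    apply (subst gle_def')
    using Suc via_lo[of "upn (Suc k)" "upn (Suc (Suc k))"] via_ro[of star "upn (Suc k)"] gle_refl[of star]
    by auto
qed
lemma F7: "gle (gsum (upn k) star) (gsum (upn (Suc k)) star)"
  using gle_mono[OF F7u gle_refl] .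
lemma F7b: "gle (gsum (upn k) star) (gsum (upn (Suc (Suc k))) star)"
  using gle_trans[OF F7 F7] .
lemma F8: "\<not> gle (gsum (upn (Suc k)) star) (gsum (upn k) star)"
  by (rule lo_not) (simp add: upn_Suc_star)


abbreviation ustar :: "nat \<Rightarrow> game" where "ustar k \<equiv> gsum (upn k) star"

lemma lo_ustar: "set (lo (ustar (Suc m))) = {ustar m, gsum (upn (Suc m)) zero}"
  by (simp add: upn_Suc_star)
lemma ro_ustar: "set (ro (ustar (Suc m))) = {gsum star star, gsum (upn (Suc m)) zero}"
  by (simp add: upn_Suc_star)

lemma star_le_K:
  assumes "\<forall>r\<in>set R. \<not> gle r star"
  shows "gle star (Game (zero # L) (zero # R))"
  apply (subst gle_def')
  using assms not_zero_star via_lo[of zero "Game (zero # L) (zero # R)" zero] gle_zz by auto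

lemma K_le_G:
  assumes "\<forall>l\<in>set L. \<not> gle (ustar (Suc m)) l"
  shows "gle (Game (zero # L) (zero # R)) (ustar (Suc m))"
  apply (subst gle_def')
  using assms F6 via_ro[of zero "Game (zero # L) (zero # R)" "gsum star star"]
    via_ro[of zero "Game (zero # L) (zero # R)" "gsum (upn (Suc m)) zero"] F3 F4
  by (auto simp: ro_ustar)

lemma G_le_K:
  assumes "\<forall>r\<in>set R. \<not> gle r star \<and> \<not> gle r (ustar (Suc m))"
    and "\<not> gle (Game (zero # L) (zero # R)) (ustar m)"
  shows "gle (ustar (Suc m)) (Game (zero # L) (zero # R))"
proof -
  have "\<not> gle (Game (zero # L) (zero # R)) (gsum (upn (Suc m)) zero)"
    by (rule via_ro[of star]) (simp_all add: upn_Suc_zero_ro star_le_K assms(1))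
  then show ?thesis
    apply (subst gle_def')
    using assms F5 by (auto simp: lo_ustar)
qed

lemma notGs: "\<not> gle (ustar (Suc k)) star"
  by (rule via_lo[of "ustar k"]) (simp_all add: upn_Suc_star F2)

lemma id1:
  "gle (ustar (Suc m)) (Game [zero, ustar m] [zero, ustar (Suc (Suc m))])"
  "gle (Game [zero, ustar m] [zero, ustar (Suc (Suc m))]) (ustar (Suc m))"
  "gle (ustar (Suc m)) (Game [zero, ustar m] [zero])"
  "gle (Game [zero, ustar m] [zero]) (ustar (Suc m))"
proof -
  have a: "\<not> gle (Game (zero # [ustar m]) (zero # R)) (ustar m)" for R
    by (rule lo_not) simp
  show "gle (ustar (Suc m)) (Game [zero, ustar m] [zero, ustar (Suc (Suc m))])"
    using G_le_K[of "[ustar (Suc (Suc m))]" m "[ustar m]"] a notGs F8 by simp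
  show "gle (Game [zero, ustar m] [zero, ustar (Suc (Suc m))]) (ustar (Suc m))"
    using K_le_G[of "[ustar m]" m] F8 by simp
  show "gle (ustar (Suc m)) (Game [zero, ustar m] [zero])"
    using G_le_K[of "[]" m "[ustar m]"] a by simp
  show "gle (Game [zero, ustar m] [zero]) (ustar (Suc m))"
    using K_le_G[of "[ustar m]" m] F8 by simp
qed


lemma X_ge:
  "gle (ustar m) (Game [zero, ustar (Suc m)] [zero, ustar (Suc m)])"
proof (cases m)
  case 0
  then show ?thesis using star_le_K[of "[ustar (Suc 0)]" "[ustar (Suc 0)]"] notGs by simp
next
  case (Suc p)
  have "\<not> gle (Game [zero, ustar (Suc m)] [zero, ustar (Suc m)]) (ustar p)"
    by (rule via_lo[of "ustar (Suc m)"]) (simp_all add: Suc F7b)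
  then show ?thesis
    using G_le_K[of "[ustar (Suc m)]" p "[ustar (Suc m)]"] notGs F8 Suc by simp
qed

lemma id3:
  fixes m :: nat
  defines "X \<equiv> Game [zero, ustar (Suc m)] [zero, ustar (Suc m)]"
  shows "gle (ustar (Suc m)) (Game [zero, X] [zero, X])"
    "gle (Game [zero, X] [zero, X]) (ustar (Suc m))"
proof -
  have 1: "\<not> gle X star"
    unfolding X_def by (rule via_lo[of "ustar (Suc m)"]) (simp_all add: F2)
  have 2: "\<not> gle X (ustar (Suc m))"
    unfolding X_def by (rule lo_not) simp
  have 3: "\<not> gle (Game [zero, X] [zero, X]) (ustar m)"
    by (rule via_lo[of X]) (simp_all add: X_ge X_def)
  show "gle (ustar (Suc m)) (Game [zero, X] [zero, X])"
    using G_le_K[of "[X]" m "[X]"] 1 2 3 by simp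
  have 4: "\<not> gle (ustar (Suc m)) X"
    unfolding X_def by (rule via_ro[of "ustar (Suc m)"]) (simp_all add: gle_refl)
  show "gle (Game [zero, X] [zero, X]) (ustar (Suc m))"
    using K_le_G[of "[X]" m] 4 by simp
qed

lemma game_eq_neg: "gle A B \<Longrightarrow> gle B A \<Longrightarrow> game_eq (neg A) (neg B)"
  by (rule eqv_game_eq) (simp_all add: gle_neg)

theorem theorem2:
  fixes n :: nat
  assumes "n \<ge> 1"
  shows "game_eq (gsum (upn n) star)
           (Game [zero, gsum (upn (n - 1)) star] [zero, gsum (upn (n + 1)) star])
       \<and> game_eq (Game [zero, gsum (upn (n - 1)) star] [zero, gsum (upn (n + 1)) star])
           (Game [zero, gsum (upn (n - 1)) star] [zero])
       \<and> game_eq (gsum (downn n) star)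
           (Game [zero, gsum (downn (n + 1)) star] [zero, gsum (downn (n - 1)) star])
       \<and> game_eq (Game [zero, gsum (downn (n + 1)) star] [zero, gsum (downn (n - 1)) star])
           (Game [zero] [zero, gsum (downn (n - 1)) star])
       \<and> game_eq (gsum (upn n) star)
           (Game [zero, Game [zero, gsum (upn n) star] [zero, gsum (upn n) star]]
                 [zero, Game [zero, gsum (upn n) star] [zero, gsum (upn n) star]])
       \<and> game_eq (gsum (downn n) star)
           (Game [zero, Game [zero, gsum (downn n) star] [zero, gsum (downn n) star]]
                 [zero, Game [zero, gsum (downn n) star] [zero, gsum (downn n) star]])"
proof -
  obtain m where n: "n = Suc m" using assms by (cases n) auto
  note I = id1[of m]
  have KK: "gle (Game [zero, ustar m] [zero, ustar (Suc (Suc m))]) (Game [zero, ustar m] [zero])"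
    "gle (Game [zero, ustar m] [zero]) (Game [zero, ustar m] [zero, ustar (Suc (Suc m))])"
    using gle_trans[OF I(2) I(3)] gle_trans[OF I(4) I(1)] by auto
  note J = id3[of m]
  have e1: "game_eq (ustar n) (Game [zero, ustar m] [zero, ustar (Suc (Suc m))])"
    using eqv_game_eq I n by simp
  have e2: "game_eq (Game [zero, ustar m] [zero, ustar (Suc (Suc m))]) (Game [zero, ustar m] [zero])"
    using eqv_game_eq KK by simp
  have e3: "game_eq (neg (ustar n)) (neg (Game [zero, ustar m] [zero, ustar (Suc (Suc m))]))"
    using game_eq_neg[OF I(1) I(2)] n by simp
  have e4: "game_eq (neg (Game [zero, ustar m] [zero, ustar (Suc (Suc m))])) (neg (Game [zero, ustar m] [zero]))"
    using game_eq_neg[OF KK(1) KK(2)] by simp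
  define X where "X = Game [zero, ustar n] [zero, ustar n]"
  have e5: "game_eq (ustar n) (Game [zero, X] [zero, X])"
    using eqv_game_eq J n unfolding X_def by simp
  have e6: "game_eq (neg (ustar n)) (neg (Game [zero, X] [zero, X]))"
    using game_eq_neg[OF J(1) J(2)] n unfolding X_def by simp
  show ?thesis
    using e1 e2 e3 e4 e5 e6 n unfolding X_def by (simp add: neg_gsum downn_neg)
qed

end
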